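(* Let $K\subset\mathbb R^2$ be a compact connected set with $\mathcal H^1(K)<+\infty$. Assume that for some $x\in K$ and $r\in(0,\mathrm{diam}(K))$ we have $\beta_K(x,r)\leq1/2$. Then $$\mathcal H^1(K\cap B(x,r))\geq 2r-3r\beta_K(x,r).$$
   Context: $\beta_K(x,r)=\frac1r\inf_L\max\{\sup_{y\in K\cap\overline B(x,r)}\mathrm{dist}(y,L),\sup_{y\in L\cap\overline B(x,r)}\mathrm{dist}(y,K)\}$, the infimum being over lines $L$ passing through $x$. *)

theory Defs
  imports "HOL-Analysis.Analysis"
begin

definition hausdorff1_pre :: "real \<Rightarrow> 'a::metric_space set \<Rightarrow> ennreal" where
  "hausdorff1_pre \<delta> A =
     (INF C \<in> {C :: nat \<Rightarrow> 'a set. A \<subseteq> (\<Union>i. C i) \<and>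
                  (\<forall>i. bounded (C i) \<and> diameter (C i) \<le> \<delta>)}.
        (\<Sum>i. ennreal (diameter (C i))))"

text \<open>1-dimensional Hausdorff measure (normalised so that segments have their length).\<close>
definition hausdorff1 :: "'a::metric_space set \<Rightarrow> ennreal" where
  "hausdorff1 A = (SUP \<delta> \<in> {0<..}. hausdorff1_pre \<delta> A)"

definition lines_through :: "real^2 \<Rightarrow> (real^2) set set" where
  "lines_through x = {{x + t *\<^sub>R v | t. True} | v. v \<noteq> 0}"

definition beta :: "(real^2) set \<Rightarrow> real^2 \<Rightarrow> real \<Rightarrow> real" where
  "beta K x r = (1 / r) *
     (INF L \<in> lines_through x.
        max (SUP y \<in> K \<inter> cball x r. infdist y L)
            (SUP y \<in> L \<inter> cball x r. infdist y K))"

end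

theory Submission
  imports Defs
begin

lemma oneD:
  fixes E :: "real set" and c d r :: real
  assumes E0: "0 \<in> E" and d0: "0 < d" and dr: "d < r" and cdef: "c = r - d/2"
    and F1: "\<And>u. \<bar>u\<bar> + d \<le> c \<Longrightarrow> \<exists>s\<in>E. \<bar>s - u\<bar> < d"
    and F2: "\<And>t1 s t2. t1 < s \<Longrightarrow> s < t2 \<Longrightarrow> \<bar>t1\<bar> \<le> c \<Longrightarrow> \<bar>t2\<bar> \<le> c \<Longrightarrow> t1 \<notin> E \<Longrightarrow> t2 \<notin> E \<Longrightarrow> s \<in> E \<Longrightarrow> t1 < -(r-d) \<and> r - d < t2"
  shows "\<exists>p q p' q'. p \<le> q \<and> p' \<le> q' \<and> (q-p)+(q'-p') \<le> 2*d \<and> {-c..c} \<subseteq> E \<union> {p..q} \<union> {p'..q'}"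
proof -
  define M where "M = {-c..c} - E"
  have c2: "2*c = 2*r - d" using cdef by simp
  show ?thesis
  proof (cases "\<exists>m0\<in>M. \<bar>m0\<bar> \<le> r - d")
    case False
    note nm = False
    show ?thesis
      apply (rule exI[of _ "-c"], rule exI[of _ "-(r-d)"], rule exI[of _ "r-d"], rule exI[of _ c])
    proof (intro conjI subsetI)
      fix t assume t: "t \<in> {-c..c}"
      show "t \<in> E \<union> {-c..-(r-d)} \<union> {r-d..c}"
      proof (cases "t \<in> E")
        case False
        hence "t \<in> M" using t M_def by auto
        hence "\<bar>t\<bar> > r - d" using nm by force
        then show ?thesis using t by (auto simp: abs_if split: if_splits)
      qed auto
    qed (use d0 dr c2 in linarith)+
  next
    case True
    then obtain m0 where m0: "m0 \<in> M" "\<bar>m0\<bar> \<le> r-d" by blast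
    have m0ne: "m0 \<noteq> 0" using m0 E0 M_def by auto
    have conv: "s \<in> M" if t1: "t1 \<in> M" and t2: "t2 \<in> M" and s1: "t1 \<le> s" and s2: "s \<le> t2" for t1 t2 s
    proof (rule ccontr)
      assume "s \<notin> M"
      hence sE: "s \<in> E" using t1 t2 s1 s2 unfolding M_def by auto
      have t1E: "t1 \<notin> E" "\<bar>t1\<bar> \<le> c" and t2E: "t2 \<notin> E" "\<bar>t2\<bar> \<le> c" using t1 t2 unfolding M_def by auto
      have "t1 < s" "s < t2" using s1 s2 sE t1E t2E by (auto simp: order.order_iff_strict)
      from F2[OF this t1E(2) t2E(2) t1E(1) t2E(1) sE] have tt: "t1 < -(r-d)" "r-d < t2" by auto
      have m0c: "m0 \<notin> E" "\<bar>m0\<bar> \<le> c" using m0 unfolding M_def by auto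
      show False
      proof (cases "m0 > 0")
        case True
        have "t1 < 0" using tt dr by linarith
        from F2[OF this True t1E(2) m0c(2) t1E(1) m0c(1) E0] show False using m0 by linarith
      next
        case False
        hence "m0 < 0" using m0ne by linarith
        have "0 < t2" using tt dr by linarith
        from F2[OF \<open>m0 < 0\<close> this m0c(2) t2E(2) m0c(1) t2E(1) E0] show False using m0 by linarith
      qed
    qed
    have Mne: "M \<noteq> {}" using m0 by auto
    have bddA: "bdd_above M" and bddB: "bdd_below M" unfolding M_def by (auto intro!: bdd_aboveI[of _ c] bdd_belowI[of _ "-c"])
    have lo: "-c \<le> Inf M" using Mne by (intro cInf_greatest) (auto simp: M_def)
    have hi: "Sup M \<le> c" using Mne by (intro cSup_least) (auto simp: M_def)
    have len: "Sup M - Inf M \<le> 2*d"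
    proof (rule ccontr)
      assume nl: "\<not> ?thesis"
      define u where "u = (Inf M + Sup M)/2"
      have u2: "2*u = Inf M + Sup M" unfolding u_def by simp
      have "u + d \<le> c" using lo hi nl u2 by linarith
      have "-u + d \<le> c" using lo hi nl u2 by linarith
      hence "\<bar>u\<bar> + d \<le> c" using \<open>u + d \<le> c\<close> by (simp add: abs_if)
      from F1[OF this] obtain s where s: "s \<in> E" "\<bar>s - u\<bar> < d" by blast
      have "s - u < d" "u - s < d" using s(2) by (simp_all add: abs_less_iff)
      hence "Inf M < s" "s < Sup M" using nl u2 by linarith+
      from cInf_lessD[OF Mne this(1)] less_cSupD[OF Mne this(2)]
      obtain t1 t2 where tt: "t1 \<in> M" "t1 < s" "t2 \<in> M" "s < t2" by blast
      have "s \<in> M" using conv[OF tt(1) tt(3)] tt(2,4) by simp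
      with s show False unfolding M_def by auto
    qed
    show ?thesis
      apply (rule exI[of _ "Inf M"], rule exI[of _ "Sup M"], rule exI[of _ 0], rule exI[of _ 0])
    proof (intro conjI subsetI)
      fix t assume t: "t \<in> {-c..c}"
      show "t \<in> E \<union> {Inf M..Sup M} \<union> {0..0}"
      proof (cases "t \<in> E")
        case False
        hence "t \<in> M" using t M_def by auto
        then show ?thesis using cInf_lower[OF _ bddB] cSup_upper[OF _ bddA] by auto
      qed auto
    qed (use len cInf_le_cSup[OF Mne bddA bddB] in auto)
  qed
qed

lemma pyth:
  fixes w v :: "'a::real_inner"
  assumes v: "norm v = 1"
  shows "norm (w - t *\<^sub>R v)^2 = norm (w - (w \<bullet> v) *\<^sub>R v)^2 + (w \<bullet> v - t)^2"
    and "norm w ^2 = (w \<bullet> v)^2 + norm (w - (w \<bullet> v) *\<^sub>R v)^2"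
proof -
  have vv: "v \<bullet> v = 1" using v by (simp add: norm_eq_1)
  show "norm (w - t *\<^sub>R v)^2 = norm (w - (w \<bullet> v) *\<^sub>R v)^2 + (w \<bullet> v - t)^2"
    unfolding power2_norm_eq_inner using vv by (simp add: inner_diff_left inner_diff_right inner_commute algebra_simps power2_eq_square)
  show "norm w ^2 = (w \<bullet> v)^2 + norm (w - (w \<bullet> v) *\<^sub>R v)^2"
    unfolding power2_norm_eq_inner using vv by (simp add: inner_diff_left inner_diff_right inner_commute algebra_simps power2_eq_square)
qed

lemma perp_le:
  fixes w v :: "'a::real_inner"
  assumes v: "norm v = 1"
  shows "norm (w - (w \<bullet> v) *\<^sub>R v) \<le> norm (w - t *\<^sub>R v)"
  by (rule power2_le_imp_le) (use pyth(1)[OF v, of w t] in auto)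

lemma geo:
  fixes K :: "'a::real_inner set"
  assumes conn: "connected K" and xK: "x \<in> K" and v: "norm v = 1" and d0: "0 < d" and dr: "d < r"
    and cdef: "c = r - d/2" and cr: "d^2 < r^2 - c^2"
    and H1: "\<And>y. y \<in> K \<Longrightarrow> dist x y \<le> r \<Longrightarrow> norm ((y - x) - ((y-x) \<bullet> v) *\<^sub>R v) < d"
    and H2: "\<And>u. \<bar>u\<bar> \<le> r \<Longrightarrow> \<exists>k\<in>K. norm (k - (x + u *\<^sub>R v)) < d"
  shows "\<exists>p q p' q'. p \<le> q \<and> p' \<le> q' \<and> (q-p)+(q'-p') \<le> 2*d \<and>
           {-c..c} \<subseteq> (\<lambda>y. (y-x) \<bullet> v) ` (K \<inter> ball x r) \<union> {p..q} \<union> {p'..q'}"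
proof -
  define f where "f = (\<lambda>y. (y-x) \<bullet> v)"
  define E where "E = f ` (K \<inter> ball x r)"
  have vv: "v \<bullet> v = 1" using v by (simp add: norm_eq_1)
  have fk: "\<bar>f k - u\<bar> \<le> norm (k - (x + u *\<^sub>R v))" for k u
  proof -
    have "f k - u = (k - (x + u *\<^sub>R v)) \<bullet> v" unfolding f_def using vv
      by (simp add: inner_diff_left inner_add_left)
    then show ?thesis using Cauchy_Schwarz_ineq2[of "k - (x + u *\<^sub>R v)" v] v by simp
  qed
  have c2: "2*c = 2*r - d" using cdef by simp
  have cpos: "c < r" "r - d \<le> c" "0 \<le> c" using c2 d0 dr by linarith+
  have E0: "0 \<in> E" unfolding E_def f_def using xK d0 dr by (auto intro!: image_eqI[of _ _ x])
  have F1: "\<exists>s\<in>E. \<bar>s - u\<bar> < d" if u: "\<bar>u\<bar> + d \<le> c" for u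
  proof -
    obtain k where k: "k \<in> K" "norm (k - (x + u *\<^sub>R v)) < d" using H2[of u] u cpos d0 by auto
    have "k - x = (k - (x + u *\<^sub>R v)) + u *\<^sub>R v" by simp
    hence "norm (k - x) \<le> norm (k - (x + u *\<^sub>R v)) + norm (u *\<^sub>R v)"
      by (metis norm_triangle_ineq)
    also have "norm (u *\<^sub>R v) = \<bar>u\<bar>" using v by simp
    finally have "dist x k < r" using k u cpos by (simp add: dist_norm norm_minus_commute)
    hence "f k \<in> E" unfolding E_def using k by auto
    moreover have "\<bar>f k - u\<bar> < d" using fk[of k u] k by linarith
    ultimately show ?thesis by blast
  qed
  have F2: "t1 < -(r-d) \<and> r - d < t2"
    if t12: "t1 < s" "s < t2" "\<bar>t1\<bar> \<le> c" "\<bar>t2\<bar> \<le> c" "t1 \<notin> E" "t2 \<notin> E" "s \<in> E" for t1 s t2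
  proof -
    define A where "A = K \<inter> {y. dist x y < r \<and> t1 < f y \<and> f y < t2}"
    have op: "open {y. dist x y < r \<and> t1 < f y \<and> f y < t2}"
      unfolding f_def by (intro open_Collect_conj open_Collect_less continuous_intros)
    have cl: "closed {y. dist x y \<le> r \<and> t1 \<le> f y \<and> f y \<le> t2}"
      unfolding f_def by (intro closed_Collect_conj closed_Collect_le continuous_intros)
    have Aeq: "A = K \<inter> {y. dist x y \<le> r \<and> t1 \<le> f y \<and> f y \<le> t2}"
    proof
      show "A \<subseteq> K \<inter> {y. dist x y \<le> r \<and> t1 \<le> f y \<and> f y \<le> t2}" unfolding A_def by auto
    next
      show "K \<inter> {y. dist x y \<le> r \<and> t1 \<le> f y \<and> f y \<le> t2} \<subseteq> A"
      proof
        fix y assume y: "y \<in> K \<inter> {y. dist x y \<le> r \<and> t1 \<le> f y \<and> f y \<le> t2}"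
        have yK: "y \<in> K" "dist x y \<le> r" "t1 \<le> f y" "f y \<le> t2" using y by simp_all
        have dl: "dist x y < r"
        proof (rule ccontr)
          assume "\<not> dist x y < r"
          hence "dist x y = r" using yK(2) by linarith
          hence dxy: "norm (y - x) = r" by (simp add: dist_norm norm_minus_commute)
          have h: "norm ((y - x) - ((y-x) \<bullet> v) *\<^sub>R v) < d" using H1[OF yK(1,2)] .
          have h2: "norm ((y - x) - ((y-x) \<bullet> v) *\<^sub>R v)^2 < d^2"
            using h by (intro power_strict_mono) auto
          have "-c \<le> t1" "t2 \<le> c" using t12(3,4) by (simp_all add: abs_le_iff)
          hence "-c \<le> f y" "f y \<le> c" using yK(3,4) by linarith+
          hence "\<bar>f y\<bar> \<le> \<bar>c\<bar>" using cpos(3) by (simp add: abs_le_iff)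
          hence f2: "(f y)^2 \<le> c^2" by (simp add: abs_le_square_iff)
          have "r^2 = (f y)^2 + norm ((y - x) - ((y-x) \<bullet> v) *\<^sub>R v)^2"
            using pyth(2)[OF v, of "y - x"] dxy unfolding f_def by simp
          with h2 f2 cr show False by linarith
        qed
        hence "f y \<in> E" unfolding E_def using yK(1) by auto
        hence "f y \<noteq> t1" "f y \<noteq> t2" using t12(5,6) by auto
        then show "y \<in> A" unfolding A_def using yK dl by auto
      qed
    qed
    have "openin (top_of_set K) A" unfolding A_def by (rule openin_open_Int[OF op])
    moreover have "closedin (top_of_set K) A" unfolding Aeq by (rule closedin_closed_Int[OF cl])
    moreover have "A \<noteq> {}"
    proof -
      obtain y where "y \<in> K \<inter> ball x r" "s = f y" using t12 unfolding E_def by auto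
      then show ?thesis unfolding A_def using t12 by auto
    qed
    moreover have "\<forall>T. openin (top_of_set K) T \<and> closedin (top_of_set K) T \<longrightarrow> T = {} \<or> T = K"
      using conn connected_clopen by blast
    ultimately have AK: "A = K" by blast
    obtain k1 where k1: "k1 \<in> K" "norm (k1 - (x + r *\<^sub>R v)) < d" using H2[of r] dr d0 by auto
    obtain k2 where k2: "k2 \<in> K" "norm (k2 - (x + (-r) *\<^sub>R v)) < d" using H2[of "-r"] dr d0 by auto
    have "k1 \<in> A" "k2 \<in> A" using k1(1) k2(1) AK by auto
    hence "f k1 < t2" "t1 < f k2" unfolding A_def by auto
    moreover have "\<bar>f k1 - r\<bar> < d" "\<bar>f k2 - (-r)\<bar> < d" using fk[of k1 r] fk[of k2 "-r"] k1 k2 by linarith+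
    ultimately show ?thesis by (simp add: abs_less_iff)
  qed
  from oneD[OF E0 d0 dr cdef F1 F2] show ?thesis unfolding E_def f_def .
qed

lemma meas:
  fixes a b :: "nat \<Rightarrow> real"
  assumes cov: "{-c..c} \<subseteq> E \<union> {p..q} \<union> {p'..q'}" and Ec: "E \<subseteq> (\<Union>i. {a i..b i})"
    and ab: "\<And>i. a i \<le> b i" and "p \<le> q" "p' \<le> q'" "0 \<le> c"
  shows "ennreal (2*c) \<le> ennreal (q-p) + ennreal (q'-p') + (\<Sum>i. ennreal (b i - a i))"
proof -
  have "ennreal (2*c) = emeasure lborel {-c..c}" using assms by simp
  also have "\<dots> \<le> emeasure lborel ({p..q} \<union> {p'..q'} \<union> (\<Union>i. {a i..b i}))"
    using cov Ec by (intro emeasure_mono) auto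
  also have "\<dots> \<le> emeasure lborel ({p..q} \<union> {p'..q'}) + emeasure lborel (\<Union>i. {a i..b i})"
    by (intro emeasure_subadditive) auto
  also have "\<dots> \<le> (emeasure lborel {p..q} + emeasure lborel {p'..q'}) + (\<Sum>i. emeasure lborel {a i..b i})"
    by (intro add_mono emeasure_subadditive emeasure_subadditive_countably) auto
  also have "\<dots> = ennreal (q-p) + ennreal (q'-p') + (\<Sum>i. ennreal (b i - a i))"
    using assms by simp
  finally show ?thesis .
qed

lemma proj_interval:
  fixes C :: "'a::real_inner set"
  assumes bC: "bounded C" and v: "norm v = 1"
  shows "\<exists>a b. a \<le> b \<and> b - a \<le> diameter C \<and> (\<lambda>y. (y - x) \<bullet> v) ` C \<subseteq> {a..b}"
proof (cases "C = {}")
  case True then show ?thesis by (auto intro!: exI[of _ 0])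
next
  case False
  define f where "f = (\<lambda>y. (y - x) \<bullet> v)"
  have fd: "f y \<le> f z + diameter C" if "y \<in> C" "z \<in> C" for y z
  proof -
    have "f y - f z = (y - z) \<bullet> v" unfolding f_def by (simp add: inner_diff_left)
    also have "\<dots> \<le> norm (y - z) * norm v" by (rule norm_cauchy_schwarz)
    also have "\<dots> = dist y z" using v by (simp add: dist_norm)
    also have "\<dots> \<le> diameter C" by (rule diameter_bounded_bound[OF bC that])
    finally show ?thesis by linarith
  qed
  obtain z0 where z0: "z0 \<in> C" using False by blast
  have ne: "f ` C \<noteq> {}" using False by auto
  have bA: "bdd_above (f ` C)" using fd z0 by (intro bdd_aboveI[of _ "f z0 + diameter C"]) auto
  have bB: "bdd_below (f ` C)" using fd z0 by (intro bdd_belowI[of _ "f z0 - diameter C"]) force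
  have "Sup (f ` C) - diameter C \<le> Inf (f ` C)"
  proof (rule cInf_greatest[OF ne])
    fix w assume "w \<in> f ` C"
    then obtain z where z: "z \<in> C" "w = f z" by auto
    have "Sup (f ` C) \<le> f z + diameter C" using fd z by (intro cSup_least[OF ne]) auto
    then show "Sup (f ` C) - diameter C \<le> w" using z by simp
  qed
  moreover have "Inf (f ` C) \<le> Sup (f ` C)" by (rule cInf_le_cSup[OF ne bA bB])
  moreover have "f ` C \<subseteq> {Inf (f ` C)..Sup (f ` C)}" using cInf_lower[OF _ bB] cSup_upper[OF _ bA] by auto
  ultimately have "\<exists>a b. a \<le> b \<and> b - a \<le> diameter C \<and> f ` C \<subseteq> {a..b}"
    by (intro exI[of _ "Inf (f ` C)"] exI[of _ "Sup (f ` C)"]) auto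
  then show ?thesis unfolding f_def .
qed

theorem lemma5p4:
  fixes K :: "(real^2) set" and x :: "real^2" and r :: real
  assumes "compact K" and "connected K" and "hausdorff1 K < \<infinity>"
    and "x \<in> K" and "0 < r" and "r < diameter K"
    and "beta K x r \<le> 1/2"
  shows "hausdorff1 (K \<inter> ball x r) \<ge> ennreal (2 * r - 3 * r * beta K x r)"
proof -
  note cK = \<open>compact K\<close> and conn = \<open>connected K\<close> and xK = \<open>x \<in> K\<close> and r0 = \<open>0 < r\<close>
  define \<beta> where "\<beta> = beta K x r"
  define \<Phi> where "\<Phi> = (\<lambda>L. max (SUP y \<in> K \<inter> cball x r. infdist y L) (SUP y \<in> L \<inter> cball x r. infdist y K))"
  have Kne: "K \<noteq> {}" using xK by auto
  have xL: "x \<in> L" if "L \<in> lines_through x" for L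
    using that unfolding lines_through_def by (auto intro!: exI[of _ 0])
  have bdd1: "bdd_above ((\<lambda>y. infdist y L) ` (K \<inter> cball x r))" if "x \<in> L" for L
  proof (rule bdd_aboveI[of _ r])
    fix z assume "z \<in> (\<lambda>y. infdist y L) ` (K \<inter> cball x r)"
    then obtain y where y: "y \<in> cball x r" "z = infdist y L" by auto
    have "infdist y L \<le> dist y x" by (rule infdist_le[OF that])
    then show "z \<le> r" using y by (simp add: dist_commute)
  qed
  have bdd2: "bdd_above ((\<lambda>y. infdist y K) ` (L \<inter> cball x r))" for L
  proof (rule bdd_aboveI[of _ r])
    fix z assume "z \<in> (\<lambda>y. infdist y K) ` (L \<inter> cball x r)"
    then obtain y where y: "y \<in> cball x r" "z = infdist y K" by auto
    have "infdist y K \<le> dist y x" by (rule infdist_le[OF xK])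
    then show "z \<le> r" using y by (simp add: dist_commute)
  qed
  have \<Phi>0: "0 \<le> \<Phi> L" if "L \<in> lines_through x" for L
  proof -
    have "0 \<le> (SUP y \<in> K \<inter> cball x r. infdist y L)"
      using r0 xK by (intro cSUP_upper2[OF bdd1[OF xL[OF that]], of x]) (auto simp: infdist_nonneg)
    then show ?thesis unfolding \<Phi>_def by simp
  qed
  obtain v0 :: "real^2" where "norm v0 = 1" using vector_choose_size[of 1] by auto
  hence linesne: "lines_through x \<noteq> {}" unfolding lines_through_def by auto
  have betaeq: "\<beta> = (1/r) * (INF L \<in> lines_through x. \<Phi> L)" unfolding \<beta>_def beta_def \<Phi>_def ..
  have I0: "0 \<le> (INF L \<in> lines_through x. \<Phi> L)"
    using linesne \<Phi>0 by (intro cINF_greatest) auto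
  have Ieq: "(INF L \<in> lines_through x. \<Phi> L) = r * \<beta>" using betaeq r0 by simp
  have \<beta>0: "0 \<le> \<beta>" using I0 Ieq r0 by (simp add: zero_le_mult_iff)
  have \<beta>h: "\<beta> \<le> 1/2" using assms(7) unfolding \<beta>_def .
  have key: "ennreal (2*r - 3*(r*\<beta> + e)) \<le> (\<Sum>i. ennreal (diameter (C i)))"
    if e: "0 < e" "e < r/10" and C: "K \<inter> ball x r \<subseteq> (\<Union>i. C i)" "\<And>i. bounded (C i)" for e C
  proof -
    define d where "d = r*\<beta> + e"
    have "(INF L \<in> lines_through x. \<Phi> L) < d" using Ieq e unfolding d_def by simp
    then obtain L where L: "L \<in> lines_through x" "\<Phi> L < d"
      using cInf_lessD[of "\<Phi> ` lines_through x" d] linesne by auto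
    obtain w where w: "w \<noteq> 0" "L = {x + t *\<^sub>R w | t. True}" using L(1) unfolding lines_through_def by auto
    define v where "v = (1 / norm w) *\<^sub>R w"
    have v: "norm v = 1" using w(1) unfolding v_def by simp
    have Lv: "y \<in> L \<longleftrightarrow> (\<exists>t. y = x + t *\<^sub>R v)" for y
    proof
      assume "y \<in> L"
      then obtain t where "y = x + t *\<^sub>R w" using w by auto
      hence "y = x + (t * norm w) *\<^sub>R v" using w(1) unfolding v_def by simp
      then show "\<exists>t. y = x + t *\<^sub>R v" by blast
    next
      assume "\<exists>t. y = x + t *\<^sub>R v"
      then obtain t where "y = x + t *\<^sub>R v" by auto
      hence "y = x + (t / norm w) *\<^sub>R w" unfolding v_def by simp
      then show "y \<in> L" using w by auto
    qed
    have Lne: "L \<noteq> {}" using xL[OF L(1)] by auto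
    have H1: "norm ((y - x) - ((y-x) \<bullet> v) *\<^sub>R v) < d" if y: "y \<in> K" "dist x y \<le> r" for y
    proof -
      have "infdist y L \<le> (SUP y \<in> K \<inter> cball x r. infdist y L)"
        using y by (intro cSUP_upper[OF _ bdd1[OF xL[OF L(1)]]]) auto
      also have "\<dots> \<le> \<Phi> L" unfolding \<Phi>_def by simp
      finally have lt: "infdist y L < d" using L(2) by simp
      have "norm ((y - x) - ((y-x) \<bullet> v) *\<^sub>R v) \<le> infdist y L"
        unfolding infdist_notempty[OF Lne]
      proof (rule cINF_greatest[OF Lne])
        fix l assume "l \<in> L"
        then obtain t where "l = x + t *\<^sub>R v" using Lv by auto
        hence "dist y l = norm ((y - x) - t *\<^sub>R v)" by (simp add: dist_norm algebra_simps)
        then show "norm ((y - x) - ((y-x) \<bullet> v) *\<^sub>R v) \<le> dist y l" using perp_le[OF v] by simp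
      qed
      with lt show ?thesis by simp
    qed
    have H2: "\<exists>k\<in>K. norm (k - (x + u *\<^sub>R v)) < d" if u: "\<bar>u\<bar> \<le> r" for u
    proof -
      define p where "p = x + u *\<^sub>R v"
      have pL: "p \<in> L \<inter> cball x r" using Lv u v unfolding p_def by (auto simp: dist_norm)
      have "infdist p K \<le> (SUP y \<in> L \<inter> cball x r. infdist y K)"
        using pL by (intro cSUP_upper[OF _ bdd2]) auto
      also have "\<dots> \<le> \<Phi> L" unfolding \<Phi>_def by simp
      finally have "infdist p K < d" using L(2) by simp
      hence "(INF k \<in> K. dist p k) < d" unfolding infdist_notempty[OF Kne] .
      then obtain k where "k \<in> K" "dist p k < d"
        using cInf_lessD[of "(\<lambda>k. dist p k) ` K" d] Kne by auto
      then show ?thesis unfolding p_def by (auto simp: dist_norm norm_minus_commute)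
    qed
    define c where "c = r - d/2"
    have d0: "0 < d" using \<beta>0 r0 e unfolding d_def by (simp add: add_nonneg_pos)
    have rb: "r * \<beta> \<le> r / 2" using \<beta>h r0 by (simp add: mult_left_mono[of \<beta> "1/2" r, simplified])
    have rb2: "2 * (r * \<beta>) \<le> r" using rb by simp
    have e10: "10 * e < r" using e(2) by simp
    have d35: "5 * d < 4 * r" using rb2 e10 e(1) r0 unfolding d_def by argo
    have dr: "d < r" using d35 d0 by linarith
    have "r^2 - c^2 - d^2 = d * (r - 5 * d / 4)" unfolding c_def by (simp add: power2_eq_square algebra_simps)
    moreover have "0 < d * (r - 5 * d / 4)" using d0 d35 by (intro mult_pos_pos) auto
    ultimately have cr: "d^2 < r^2 - c^2" by linarith
    obtain p q p' q' where pq: "p \<le> q" "p' \<le> q'" "(q-p)+(q'-p') \<le> 2*d"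
      and cov: "{-c..c} \<subseteq> (\<lambda>y. (y-x) \<bullet> v) ` (K \<inter> ball x r) \<union> {p..q} \<union> {p'..q'}"
      using geo[OF conn xK v d0 dr c_def cr H1 H2] by blast
    have "\<forall>i. \<exists>a b. a \<le> b \<and> b - a \<le> diameter (C i) \<and> (\<lambda>y. (y - x) \<bullet> v) ` C i \<subseteq> {a..b}"
      using proj_interval[OF C(2) v] by blast
    then obtain a b where ab: "\<And>i. a i \<le> b i" "\<And>i. b i - a i \<le> diameter (C i)"
      "\<And>i. (\<lambda>y. (y - x) \<bullet> v) ` C i \<subseteq> {a i..b i}" by metis
    have Ecov: "(\<lambda>y. (y-x) \<bullet> v) ` (K \<inter> ball x r) \<subseteq> (\<Union>i. {a i..b i})"
    proof
      fix s assume "s \<in> (\<lambda>y. (y-x) \<bullet> v) ` (K \<inter> ball x r)"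
      then obtain y where y: "y \<in> K \<inter> ball x r" "s = (y-x) \<bullet> v" by auto
      then obtain i where "y \<in> C i" using C(1) by auto
      hence "s \<in> {a i..b i}" using ab(3)[of i] y by auto
      then show "s \<in> (\<Union>i. {a i..b i})" by auto
    qed
    have c0: "0 \<le> c" using dr d0 unfolding c_def by simp
    have "ennreal (2*c) \<le> ennreal (q-p) + ennreal (q'-p') + (\<Sum>i. ennreal (b i - a i))"
      by (rule meas[OF cov Ecov ab(1) pq(1,2) c0])
    also have "ennreal (q-p) + ennreal (q'-p') = ennreal ((q-p)+(q'-p'))"
      using pq by (simp add: ennreal_plus)
    also have "\<dots> \<le> ennreal (2*d)" using pq(3) by (rule ennreal_leI)
    also have "(\<Sum>i. ennreal (b i - a i)) \<le> (\<Sum>i. ennreal (diameter (C i)))"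
      by (intro suminf_le ennreal_leI ab(2)) auto
    finally have main: "ennreal (2*c) \<le> ennreal (2*d) + (\<Sum>i. ennreal (diameter (C i)))"
      by (simp add: add_left_mono)
    show ?thesis
    proof (cases "(\<Sum>i. ennreal (diameter (C i))) = top")
      case True then show ?thesis by simp
    next
      case False
      then obtain S where S: "(\<Sum>i. ennreal (diameter (C i))) = ennreal S" "0 \<le> S"
        by (metis ennreal_cases top.not_eq_extremum ennreal_less_top less_ennreal.abs_eq) 
      have "ennreal (2*c) \<le> ennreal (2*d + S)" using main S d0 by (simp add: ennreal_plus)
      hence "2*c \<le> 2*d + S" using S d0 by (subst (asm) ennreal_le_iff) auto
      moreover have "2*c = 2*r - d" unfolding c_def by simp
      ultimately have "2*r - 3*(r*\<beta> + e) \<le> S" unfolding d_def by argo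
      then show ?thesis using S by (simp add: ennreal_leI)
    qed
  qed
  have lower: "ennreal (2 * r - 3 * r * \<beta>) \<le> (\<Sum>i. ennreal (diameter (C i)))"
    if C: "K \<inter> ball x r \<subseteq> (\<Union>i. C i)" "\<And>i. bounded (C i)" for C
  proof (cases "(\<Sum>i. ennreal (diameter (C i))) = top")
    case True then show ?thesis by simp
  next
    case False
    then obtain S where S: "(\<Sum>i. ennreal (diameter (C i))) = ennreal S" "0 \<le> S"
      by (metis ennreal_cases top.not_eq_extremum ennreal_less_top less_ennreal.abs_eq)
    have "2 * r - 3 * r * \<beta> \<le> S"
    proof (rule field_le_epsilon)
      fix e :: real assume e: "0 < e"
      define e' where "e' = min (e/3) (r/20)"
      have e': "0 < e'" "e' < r/10" "3 * e' \<le> e" using e r0 unfolding e'_def by auto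
      have "ennreal (2*r - 3*(r*\<beta> + e')) \<le> ennreal S" using key[OF e'(1,2) C] S by simp
      hence "2*r - 3*(r*\<beta> + e') \<le> S" using S by simp
      then show "2 * r - 3 * r * \<beta> \<le> S + e" using e' by (simp add: algebra_simps)
    qed
    then show ?thesis using S by (simp add: ennreal_leI)
  qed
  have "ennreal (2 * r - 3 * r * \<beta>) \<le> hausdorff1_pre 1 (K \<inter> ball x r)"
    unfolding hausdorff1_pre_def by (rule INF_greatest) (use lower in auto)
  also have "\<dots> \<le> hausdorff1 (K \<inter> ball x r)"
    unfolding hausdorff1_def by (rule SUP_upper) auto
  finally show ?thesis unfolding \<beta>_def .
qed

end
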